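(* For every sufficiently large integer $\ell$, with $m=2^\ell$, and every unsatisfiable $k$-CNF formula $\varphi$ with $M$ clauses on $N$ Boolean variables, $\varphi\circ\mathrm{IND}_m^N$ is a $k(\ell+1)$-CNF formula with $M'=m^kM$ clauses on $N'=N(\ell+m)$ variables, and $$\mathrm{tree}_{Res(\oplus)}(\varphi\circ\mathrm{IND}_m^N)\ge\mathrm{tree}_{Res}(\varphi)\ge 2^{\mathrm{width}_{Res}(\varphi)-k}.$$
   Context: Lifted CNF: with $m=2^\ell$, $\varphi\circ\mathrm{IND}_m^N$ has variables $x_{i,j'}$ ($i\in[N]$, $0\le j'<\ell$) and $y_{i,j}$ ($i\in[N]$, $0\le j<m$); $x_{i,*}$ encodes in binary a number $x_i\in\{0,\dots,m-1\}$ and $z_i$ is interpreted as $y_{i,x_i}$. Each clause $z_{i_1}^{b_1}\lor\cdots\lor z_{i_k}^{b_k}$ of $\varphi$ is replaced by $m^k$ clauses, one for each tuple $(j_1,\dots,j_k)\in\{0,\dots,m-1\}^k$, expressing: if $x_{i_1,*}$ encodes $j_1$, ..., and $x_{i_k,*}$ encodes $j_k$, then $y_{i_1,j_1}^{b_1}\lor\cdots\lor y_{i_k,j_k}^{b_k}$. A resolution refutation of $\varphi$ is a sequence of clauses ending in the empty clause, each being a clause of $\varphi$ or derived from two earlier ones by $\frac{A\lor z,\ B\lor\bar z}{A\lor B}$; it is tree-like if its derivation dag is a tree. $\mathrm{tree}_{Res}(\varphi)$ is the minimum size of a tree-like resolution refutation; $\mathrm{width}_{Res}(\varphi)$ is the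 minimum, over all resolution refutations, of the maximum clause length in it. A $Res(\oplus)$ refutation of $\varphi$ on variables $Z$ is a sequence of affine subspaces of $\mathbb{F}_2^Z$ ending in $\mathbb{F}_2^Z$, each being the set of assignments falsifying some clause of $\varphi$ or derived from two earlier subspaces $A,B$ as any affine subspace $C\subseteq A\cup B$; tree-like if its derivation dag is a tree. $\mathrm{tree}_{Res(\oplus)}(\varphi)$ is the minimum size of a tree-like $Res(\oplus)$ refutation. *)

theory Defs
  imports Complex_Main "HOL-Library.FuncSet"
begin

text \<open>A literal is a pair (v, b): (v, True) is the positive literal v, (v, False) is its negation.
  A clause is a finite set of literals (their disjunction); a CNF is a set of clauses.\<close>

type_synonym 'v lit = "'v \<times> bool"
type_synonym 'v clause = "'v lit set"
type_synonym 'v cnf = "'v clause set"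

definition sat_lit :: "('v \<Rightarrow> bool) \<Rightarrow> 'v lit \<Rightarrow> bool" where
  "sat_lit \<alpha> l \<longleftrightarrow> \<alpha> (fst l) = snd l"

definition satisfiable :: "'v cnf \<Rightarrow> bool" where
  "satisfiable F \<longleftrightarrow> (\<exists>\<alpha>. \<forall>C\<in>F. \<exists>l\<in>C. sat_lit \<alpha> l)"

definition resolvent :: "'v clause \<Rightarrow> 'v clause \<Rightarrow> 'v clause \<Rightarrow> bool" where
  "resolvent C1 C2 D \<longleftrightarrow>
     (\<exists>A B z. C1 = A \<union> {(z, True)} \<and> C2 = B \<union> {(z, False)} \<and> D = A \<union> B)"

definition res_refutation :: "'v cnf \<Rightarrow> 'v clause list \<Rightarrow> bool" where
  "res_refutation F Cs \<longleftrightarrow> Cs \<noteq> [] \<and> last Cs = {} \<and>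
     (\<forall>i<length Cs. Cs ! i \<in> F \<or> (\<exists>p<i. \<exists>q<i. resolvent (Cs ! p) (Cs ! q) (Cs ! i)))"

definition width_Res :: "'v cnf \<Rightarrow> nat" where
  "width_Res F = (LEAST w. \<exists>Cs. res_refutation F Cs \<and> (\<forall>C\<in>set Cs. card C \<le> w))"

text \<open>Tree-like derivations are represented as derivation trees; the size of a tree is the
  number of its nodes (= number of lines of the corresponding tree-like sequence).\<close>
datatype 'a ptree = Ax 'a | Der 'a "'a ptree" "'a ptree"

fun root :: "'a ptree \<Rightarrow> 'a" where
  "root (Ax a) = a"
| "root (Der a _ _) = a"

fun psize :: "'a ptree \<Rightarrow> nat" where
  "psize (Ax _) = 1"
| "psize (Der _ t1 t2) = Suc (psize t1 + psize t2)"

fun res_tree_valid :: "'v cnf \<Rightarrow> 'v clause ptree \<Rightarrow> bool" where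
  "res_tree_valid F (Ax C) \<longleftrightarrow> C \<in> F"
| "res_tree_valid F (Der D t1 t2) \<longleftrightarrow>
     res_tree_valid F t1 \<and> res_tree_valid F t2 \<and> resolvent (root t1) (root t2) D"

definition tree_Res :: "'v cnf \<Rightarrow> nat" where
  "tree_Res F = (LEAST s. \<exists>t. res_tree_valid F t \<and> root t = {} \<and> psize t = s)"

text \<open>F_2^Z is represented as the Boolean assignments vanishing outside Z.\<close>
definition cube :: "'v set \<Rightarrow> ('v \<Rightarrow> bool) set" where
  "cube Z = {\<alpha>. \<forall>v. v \<notin> Z \<longrightarrow> \<alpha> v = False}"

text \<open>Affine subspaces of F_2^Z: solution sets of systems of linear equations
  (sum over v in U of x_v = c) over F_2 (possibly empty).\<close>
definition affine_sub :: "'v set \<Rightarrow> ('v \<Rightarrow> bool) set \<Rightarrow> bool" where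
  "affine_sub Z S \<longleftrightarrow> (\<exists>E :: ('v set \<times> bool) set. (\<forall>(U, c)\<in>E. U \<subseteq> Z) \<and>
     S = {\<alpha> \<in> cube Z. \<forall>(U, c)\<in>E. odd (card {v\<in>U. \<alpha> v}) = c})"

definition falsif :: "'v set \<Rightarrow> 'v clause \<Rightarrow> ('v \<Rightarrow> bool) set" where
  "falsif Z C = {\<alpha> \<in> cube Z. \<forall>l\<in>C. \<not> sat_lit \<alpha> l}"

fun resx_tree_valid :: "'v set \<Rightarrow> 'v cnf \<Rightarrow> ('v \<Rightarrow> bool) set ptree \<Rightarrow> bool" where
  "resx_tree_valid Z F (Ax S) \<longleftrightarrow> (\<exists>C\<in>F. S = falsif Z C)"
| "resx_tree_valid Z F (Der S t1 t2) \<longleftrightarrow>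
     resx_tree_valid Z F t1 \<and> resx_tree_valid Z F t2 \<and> affine_sub Z S \<and> S \<subseteq> root t1 \<union> root t2"

definition tree_ResX :: "'v set \<Rightarrow> 'v cnf \<Rightarrow> nat" where
  "tree_ResX Z F = (LEAST s. \<exists>t. resx_tree_valid Z F t \<and> root t = cube Z \<and> psize t = s)"

text \<open>X i j' is x_{i,j'} (j' < l), Y i j is y_{i,j} (j < m).\<close>
datatype lvar = X nat nat | Y nat nat

definition lift_vars :: "nat \<Rightarrow> nat \<Rightarrow> lvar set" where
  "lift_vars N l = {X i j | i j. i < N \<and> j < l} \<union> {Y i j | i j. i < N \<and> j < 2 ^ l}"

text \<open>For a clause C and a choice tau of an index tau(lit) < m for every literal of C,
  the clause "if x_{i,*} encodes tau(i,b) for all (i,b) in C then OR of y_{i,tau(i,b)}^b".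
  x_{i,*} encodes j in binary: x_{i,j'} = bit j' of j.\<close>
definition lift_clause :: "nat \<Rightarrow> nat clause \<Rightarrow> (nat lit \<Rightarrow> nat) \<Rightarrow> lvar clause" where
  "lift_clause l C \<tau> =
     (\<Union>lt\<in>C. {(X (fst lt) j, \<not> odd (\<tau> lt div 2 ^ j)) | j. j < l})
     \<union> {(Y (fst lt) (\<tau> lt), snd lt) | lt. lt \<in> C}"

definition lift :: "nat \<Rightarrow> nat cnf \<Rightarrow> lvar cnf" where
  "lift l F = {lift_clause l C \<tau> | C \<tau>. C \<in> F \<and> \<tau> \<in> C \<rightarrow>\<^sub>E {..<2 ^ l}}"

end

theory Submission
  imports Defs
begin


definition x3 :: "('a \<Rightarrow> bool) \<Rightarrow> ('a \<Rightarrow> bool) \<Rightarrow> ('a \<Rightarrow> bool) \<Rightarrow> ('a \<Rightarrow> bool)" where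
  "x3 a b c = (\<lambda>v. a v \<noteq> (b v \<noteq> c v))"

definition closed3 :: "('a \<Rightarrow> bool) set \<Rightarrow> bool" where
  "closed3 S \<longleftrightarrow> (\<forall>a\<in>S. \<forall>b\<in>S. \<forall>c\<in>S. x3 a b c \<in> S)"

lemma parity_xor:
  assumes "finite U"
  shows "odd (card {v\<in>U. P v \<noteq> Q v}) = (odd (card {v\<in>U. P v}) \<noteq> odd (card {v\<in>U. Q v}))"
  using assms
proof (induction U rule: finite_induct)
  case empty
  then show ?case by simp
next
  case (insert x U)
  have e: "\<And>R. {v\<in>insert x U. R v} = (if R x then insert x {v\<in>U. R v} else {v\<in>U. R v})"
    by auto
  have c: "\<And>R. card (insert x {v\<in>U. R v}) = Suc (card {v\<in>U. R v})"
    using insert by (simp add: card_insert_disjoint)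
  show ?case using insert.IH by (simp only: e c split: if_split) auto
qed

lemma affine_closed3:
  assumes "finite Z" "affine_sub Z S"
  shows "closed3 S"
proof -
  obtain E where E: "\<forall>(U, c)\<in>E. U \<subseteq> Z"
    "S = {\<alpha> \<in> cube Z. \<forall>(U, c)\<in>E. odd (card {v\<in>U. \<alpha> v}) = c}"
    using assms(2) unfolding affine_sub_def by blast
  show ?thesis unfolding closed3_def
  proof (intro ballI)
    fix a b c assume abc: "a \<in> S" "b \<in> S" "c \<in> S"
    have "x3 a b c \<in> cube Z" using abc E(2) by (auto simp: cube_def x3_def)
    moreover have "\<forall>(U, d)\<in>E. odd (card {v\<in>U. x3 a b c v}) = d"
    proof (intro ballI, clarify)
      fix U d assume Ud: "(U, d) \<in> E"
      have fU: "finite U" using E(1) Ud assms(1) finite_subset by fastforce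
      have "odd (card {v\<in>U. x3 a b c v}) = (odd (card {v\<in>U. a v}) \<noteq> (odd (card {v\<in>U. b v}) \<noteq> odd (card {v\<in>U. c v})))"
        unfolding x3_def using parity_xor[OF fU, of a "\<lambda>v. b v \<noteq> c v"] parity_xor[OF fU, of b c] by (simp; blast)
      moreover have "odd (card {v\<in>U. a v}) = d" "odd (card {v\<in>U. b v}) = d" "odd (card {v\<in>U. c v}) = d"
        using abc E(2) Ud by auto
      ultimately show "odd (card {v\<in>U. x3 a b c v}) = d" by simp
    qed
    ultimately show "x3 a b c \<in> S" using E(2) by simp
  qed
qed

lemma falsif_closed3: "closed3 (falsif Z D)"
  unfolding closed3_def falsif_def cube_def x3_def sat_lit_def by auto

lemma valid_closed3:
  assumes "finite Z" "resx_tree_valid Z F t"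
  shows "closed3 (root t)"
  using assms(2)
proof (induction t)
  case (Ax S)
  then show ?case using falsif_closed3 by auto
next
  case (Der S t1 t2)
  then show ?case using affine_closed3[OF assms(1)] by auto
qed

lemma x3_ids:
  "x3 p q (x3 p q r) = r" "x3 (x3 p q r) q r = p" "x3 p (x3 p q r) r = q"
  "x3 p q r = x3 q p r" "x3 p q r = x3 p r q"
  by (auto simp: x3_def)

lemma xor_split:
  assumes A: "closed3 A" and B: "closed3 B"
    and m: "p \<in> A \<union> B" "q \<in> A \<union> B" "r \<in> A \<union> B" "x3 p q r \<in> A \<union> B"
    and d: "\<And>z. z \<in> A \<Longrightarrow> z \<in> B \<Longrightarrow> False"
  shows "(x3 p q r \<in> A) = ((p \<in> A) \<noteq> ((q \<in> A) \<noteq> (r \<in> A)))"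
proof -
  define w where "w = x3 p q r"
  have i1: "x3 p q w = r" "x3 w q r = p" "x3 p w r = q" "x3 q r w = p" "x3 p r w = q"
    unfolding w_def by (auto simp: x3_def)
  have cA: "\<And>a b c. a\<in>A \<Longrightarrow> b\<in>A \<Longrightarrow> c\<in>A \<Longrightarrow> x3 a b c \<in> A" using A unfolding closed3_def by blast
  have cB: "\<And>a b c. a\<in>B \<Longrightarrow> b\<in>B \<Longrightarrow> c\<in>B \<Longrightarrow> x3 a b c \<in> B" using B unfolding closed3_def by blast
  note f = cA[of p q w, unfolded i1] cA[of w q r, unfolded i1] cA[of p w r, unfolded i1]
      cA[of p q r, folded w_def]
      cB[of p q w, unfolded i1] cB[of w q r, unfolded i1] cB[of p w r, unfolded i1]
      cB[of p q r, folded w_def]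
  have m': "p \<in> A \<or> p \<in> B" "q \<in> A \<or> q \<in> B" "r \<in> A \<or> r \<in> B" "w \<in> A \<or> w \<in> B"
    using m w_def by auto
  have d': "\<not> (p \<in> A \<and> p \<in> B)" "\<not> (q \<in> A \<and> q \<in> B)" "\<not> (r \<in> A \<and> r \<in> B)" "\<not> (w \<in> A \<and> w \<in> B)"
    using d by blast+
  show ?thesis unfolding w_def[symmetric]
    using f m' d' by argo
qed



lemma lift_vars_X[simp]: "X i j \<in> lift_vars N l \<longleftrightarrow> i < N \<and> j < l"
  by (auto simp: lift_vars_def)
lemma lift_vars_Y[simp]: "Y i j \<in> lift_vars N l \<longleftrightarrow> i < N \<and> j < 2 ^ l"
  by (auto simp: lift_vars_def)

fun blk :: "lvar \<Rightarrow> nat" where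
  "blk (X i j) = i" | "blk (Y i j) = i"

definition flip :: "'a \<Rightarrow> ('a \<Rightarrow> bool) \<Rightarrow> ('a \<Rightarrow> bool)" where
  "flip u \<beta> = \<beta>(u := \<not> \<beta> u)"

definition hadd3 :: "(('a \<Rightarrow> bool) \<Rightarrow> bool) \<Rightarrow> bool" where
  "hadd3 h \<longleftrightarrow> (\<forall>a b c. h (x3 a b c) = (h a \<noteq> (h b \<noteq> h c)))"

definition add3 :: "(('a \<Rightarrow> bool) \<Rightarrow> ('b \<Rightarrow> bool)) \<Rightarrow> bool" where
  "add3 E \<longleftrightarrow> (\<forall>a b c. E (x3 a b c) = x3 (E a) (E b) (E c))"

definition good :: "nat \<Rightarrow> nat \<Rightarrow> nat set \<Rightarrow> (nat \<Rightarrow> bool) \<Rightarrow> ((lvar \<Rightarrow> bool) \<Rightarrow> (lvar \<Rightarrow> bool)) \<Rightarrow> bool" where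
  "good N l Q \<rho> E \<longleftrightarrow> add3 E
    \<and> (\<forall>\<beta> v. v \<in> lift_vars N l \<and> blk v \<notin> Q \<longrightarrow> E \<beta> v = \<beta> v)
    \<and> (\<forall>\<beta> \<beta>'. (\<forall>v. v \<in> lift_vars N l \<and> blk v \<notin> Q \<longrightarrow> \<beta> v = \<beta>' v) \<longrightarrow> E \<beta> = E \<beta>')
    \<and> (\<forall>i\<in>Q. \<forall>\<beta> t. t < 2 ^ l \<and> (\<forall>j<l. E \<beta> (X i j) = odd (t div 2 ^ j)) \<longrightarrow> E \<beta> (Y i t) = \<rho> i)"

lemma goodD:
  assumes "good N l Q \<rho> E"
  shows "add3 E" and "\<And>\<beta> v. v \<in> lift_vars N l \<Longrightarrow> blk v \<notin> Q \<Longrightarrow> E \<beta> v = \<beta> v"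
    and "\<And>\<beta> \<beta>'. (\<And>v. v \<in> lift_vars N l \<Longrightarrow> blk v \<notin> Q \<Longrightarrow> \<beta> v = \<beta>' v) \<Longrightarrow> E \<beta> = E \<beta>'"
    and "\<And>i \<beta> t. i \<in> Q \<Longrightarrow> t < 2 ^ l \<Longrightarrow> (\<forall>j<l. E \<beta> (X i j) = odd (t div 2 ^ j)) \<Longrightarrow> E \<beta> (Y i t) = \<rho> i"
proof -
  have g: "add3 E" "\<forall>\<beta> v. v \<in> lift_vars N l \<and> blk v \<notin> Q \<longrightarrow> E \<beta> v = \<beta> v"
    "\<forall>\<beta> \<beta>'. (\<forall>v. v \<in> lift_vars N l \<and> blk v \<notin> Q \<longrightarrow> \<beta> v = \<beta>' v) \<longrightarrow> E \<beta> = E \<beta>'"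
    "\<forall>i\<in>Q. \<forall>\<beta> t. t < 2 ^ l \<and> (\<forall>j<l. E \<beta> (X i j) = odd (t div 2 ^ j)) \<longrightarrow> E \<beta> (Y i t) = \<rho> i"
    using assms unfolding good_def by simp_all
  show "add3 E" by (fact g(1))
  show "\<And>\<beta> v. v \<in> lift_vars N l \<Longrightarrow> blk v \<notin> Q \<Longrightarrow> E \<beta> v = \<beta> v" using g(2) by simp
  show "\<And>\<beta> \<beta>'. (\<And>v. v \<in> lift_vars N l \<Longrightarrow> blk v \<notin> Q \<Longrightarrow> \<beta> v = \<beta>' v) \<Longrightarrow> E \<beta> = E \<beta>'"
  proof -
    fix \<beta> \<beta>' :: "lvar \<Rightarrow> bool" assume "\<And>v. v \<in> lift_vars N l \<Longrightarrow> blk v \<notin> Q \<Longrightarrow> \<beta> v = \<beta>' v"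
    then have "\<forall>v. v \<in> lift_vars N l \<and> blk v \<notin> Q \<longrightarrow> \<beta> v = \<beta>' v" by blast
    then show "E \<beta> = E \<beta>'" using g(3) by blast
  qed
  show "\<And>i \<beta> t. i \<in> Q \<Longrightarrow> t < 2 ^ l \<Longrightarrow> (\<forall>j<l. E \<beta> (X i j) = odd (t div 2 ^ j)) \<Longrightarrow> E \<beta> (Y i t) = \<rho> i"
    using g(4) by blast
qed

lemma path:
  assumes "finite D"
  shows "\<forall>v. v \<notin> D \<longrightarrow> \<beta> v = \<gamma> v \<Longrightarrow> h \<beta> \<noteq> h \<gamma> \<Longrightarrow> \<exists>u\<in>D. \<exists>\<delta>. h (flip u \<delta>) \<noteq> h \<delta>"
  using assms
proof (induction D arbitrary: \<beta> rule: finite_induct)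
  case empty
  then have "\<beta> = \<gamma>" by auto
  then show ?case using empty by simp
next
  case (insert x D)
  show ?case
  proof (cases "\<beta> x = \<gamma> x")
    case True
    then have "\<forall>v. v \<notin> D \<longrightarrow> \<beta> v = \<gamma> v" using insert.prems by auto
    then show ?thesis using insert.IH insert.prems by blast
  next
    case False
    show ?thesis
    proof (cases "h (flip x \<beta>) \<noteq> h \<beta>")
      case True
      then show ?thesis by blast
    next
      case False2: False
      have "\<forall>v. v \<notin> D \<longrightarrow> flip x \<beta> v = \<gamma> v" using insert.prems False by (auto simp: flip_def)
      then show ?thesis using insert.IH[of "flip x \<beta>"] insert.prems False2 by auto
    qed
  qed
qed

lemma flip_all:
  assumes "hadd3 h" "h (flip u \<gamma>) \<noteq> h \<gamma>"
  shows "h (flip u \<beta>) \<noteq> h \<beta>"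
proof -
  have "flip u \<beta> = x3 \<beta> \<gamma> (flip u \<gamma>)" by (auto simp: flip_def x3_def)
  then show ?thesis using assms unfolding hadd3_def by metis
qed

lemma cover:
  assumes E: "add3 E" and R: "range E \<subseteq> S1 \<union> S2" and c1: "closed3 S1" and c2: "closed3 S2"
    and n1: "\<not> range E \<subseteq> S1" and n2: "\<not> range E \<subseteq> S2"
  shows "hadd3 (\<lambda>\<beta>. E \<beta> \<in> S1) \<and> (\<forall>\<beta>. E \<beta> \<in> S1 \<longleftrightarrow> E \<beta> \<notin> S2)"
proof -
  obtain b1 where b1: "E b1 \<notin> S1" "E b1 \<in> S2" using n1 R by blast
  obtain b2 where b2: "E b2 \<notin> S2" "E b2 \<in> S1" using n2 R by blast
  have cl1: "\<And>a b c. a\<in>S1 \<Longrightarrow> b\<in>S1 \<Longrightarrow> c\<in>S1 \<Longrightarrow> x3 a b c \<in> S1" using c1 unfolding closed3_def by blast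
  have cl2: "\<And>a b c. a\<in>S2 \<Longrightarrow> b\<in>S2 \<Longrightarrow> c\<in>S2 \<Longrightarrow> x3 a b c \<in> S2" using c2 unfolding closed3_def by blast
  have crE0: "\<And>a b c. x3 (E a) (E b) (E c) \<in> range E" using E unfolding add3_def by (metis rangeI)
  have crE: "closed3 (range E)" unfolding closed3_def using crE0 by blast
  have disj: "\<And>\<gamma>. E \<gamma> \<in> S1 \<Longrightarrow> E \<gamma> \<in> S2 \<Longrightarrow> False"
  proof -
    fix \<gamma> assume g: "E \<gamma> \<in> S1" "E \<gamma> \<in> S2"
    define w where "w = x3 (E b2) (E b1) (E \<gamma>)"
    have "w \<in> range E" unfolding w_def using E unfolding add3_def by (metis rangeI)
    then have "w \<in> S1 \<union> S2" using R by blast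
    moreover have "x3 (E b2) w (E \<gamma>) = E b1" "x3 (E b1) w (E \<gamma>) = E b2" unfolding w_def by (auto simp: x3_def)
    ultimately show False using cl1[of "E b2" w "E \<gamma>"] cl2[of "E b1" w "E \<gamma>"] b1 b2 g by auto
  qed
  have "hadd3 (\<lambda>\<beta>. E \<beta> \<in> S1)" unfolding hadd3_def
  proof (intro allI)
    fix a b c
    have "E (x3 a b c) = x3 (E a) (E b) (E c)" using E unfolding add3_def by blast
    moreover have "(x3 (E a) (E b) (E c) \<in> S1 \<inter> range E) = ((E a \<in> S1 \<inter> range E) \<noteq> ((E b \<in> S1 \<inter> range E) \<noteq> (E c \<in> S1 \<inter> range E)))"
    proof (rule xor_split)
      show "closed3 (S1 \<inter> range E)" "closed3 (S2 \<inter> range E)" using c1 c2 crE unfolding closed3_def by blast+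
      show "E a \<in> S1 \<inter> range E \<union> S2 \<inter> range E" "E b \<in> S1 \<inter> range E \<union> S2 \<inter> range E" "E c \<in> S1 \<inter> range E \<union> S2 \<inter> range E" using R by auto
      show "x3 (E a) (E b) (E c) \<in> S1 \<inter> range E \<union> S2 \<inter> range E" using R E unfolding add3_def by (metis IntI Un_iff rangeI subsetD)
      fix z assume "z \<in> S1 \<inter> range E" "z \<in> S2 \<inter> range E"
      then show False using disj by blast
    qed
    moreover have "x3 (E a) (E b) (E c) \<in> range E" using E unfolding add3_def by (metis rangeI)
    ultimately show "(E (x3 a b c) \<in> S1) = ((E a \<in> S1) \<noteq> ((E b \<in> S1) \<noteq> (E c \<in> S1)))" by simp
  qed
  then show ?thesis using disj R by blast
qed



lemma step:
  assumes good: "good N l Q \<rho> E" and iQ: "i \<notin> Q" "i < N" and l1: "1 \<le> l"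
    and u: "blk u = i" "u \<in> lift_vars N l"
    and h: "hadd3 (\<lambda>\<beta>. H (E \<beta>))" and fl: "\<forall>\<beta>. H (E (flip u \<beta>)) \<noteq> H (E \<beta>)"
  shows "\<exists>E'. good N l (insert i Q) (\<rho>(i:=b)) E' \<and> (\<forall>\<beta>. H (E' \<beta>) = tgt) \<and> range E' \<subseteq> range E"
proof -
  define sig where "sig v = (case v of X _ j \<Rightarrow> (case u of Y _ j0 \<Rightarrow> j = 0 \<and> \<not> odd j0 | X _ _ \<Rightarrow> False) | Y _ _ \<Rightarrow> b)" for v
  define P where "P \<beta> = (\<lambda>v. if blk v = i then sig v else \<beta> v)" for \<beta> :: "lvar \<Rightarrow> bool"
  define hh where "hh \<beta> = H (E \<beta>)" for \<beta>
  define fx where "fx \<beta> = (\<lambda>v. P \<beta> v \<noteq> (v = u \<and> hh (P \<beta>) \<noteq> tgt))" for \<beta>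
  define E' where "E' \<beta> = E (fx \<beta>)" for \<beta>
  have gA: "add3 E" and gC: "\<And>\<beta> v. v \<in> lift_vars N l \<Longrightarrow> blk v \<notin> Q \<Longrightarrow> E \<beta> v = \<beta> v"
    and gD: "\<And>\<beta> \<beta>'. (\<And>v. v \<in> lift_vars N l \<Longrightarrow> blk v \<notin> Q \<Longrightarrow> \<beta> v = \<beta>' v) \<Longrightarrow> E \<beta> = E \<beta>'"
    and gE: "\<And>i \<beta> t. i \<in> Q \<Longrightarrow> t < 2 ^ l \<Longrightarrow> (\<forall>j<l. E \<beta> (X i j) = odd (t div 2 ^ j)) \<Longrightarrow> E \<beta> (Y i t) = \<rho> i"
    using goodD[OF good] by blast+
  have hA: "\<And>a b c. hh (x3 a b c) = (hh a \<noteq> (hh b \<noteq> hh c))" using h unfolding hadd3_def hh_def by blast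
  have T: "H (E' \<beta>) = tgt" for \<beta>
  proof (cases "hh (P \<beta>) = tgt")
    case True
    then have "fx \<beta> = P \<beta>" unfolding fx_def by auto
    then show ?thesis using True unfolding E'_def hh_def by simp
  next
    case False
    then have "fx \<beta> = flip u (P \<beta>)" unfolding fx_def flip_def by auto
    then show ?thesis using False fl unfolding E'_def hh_def by auto
  qed
  have PA: "P (x3 a c d) = x3 (P a) (P c) (P d)" for a c d
    unfolding P_def x3_def by auto
  have x3_apply: "x3 a c d v = (a v \<noteq> (c v \<noteq> d v))" for a c d :: "lvar \<Rightarrow> bool" and v
    by (simp add: x3_def)
  have fxA: "fx (x3 a c d) = x3 (fx a) (fx c) (fx d)" for a c d
  proof
    fix v
    have e: "hh (x3 (P a) (P c) (P d)) = (hh (P a) \<noteq> (hh (P c) \<noteq> hh (P d)))" using hA by simp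
    have 1: "fx (x3 a c d) v = ((P a v \<noteq> (P c v \<noteq> P d v)) \<noteq> (v = u \<and> (hh (P a) \<noteq> (hh (P c) \<noteq> hh (P d))) \<noteq> tgt))"
      by (simp only: fx_def PA e x3_apply)
    show "fx (x3 a c d) v = x3 (fx a) (fx c) (fx d) v"
      apply (subst 1)
      apply (simp only: x3_apply fx_def)
      by argo
  qed
  have A': "add3 E'" unfolding add3_def E'_def using fxA gA unfolding add3_def by simp
  have C': "E' \<beta> v = \<beta> v" if "v \<in> lift_vars N l" "blk v \<notin> insert i Q" for \<beta> v
  proof -
    have "v \<noteq> u" using that u by auto
    then show ?thesis unfolding E'_def using gC[of v "fx \<beta>"] that unfolding fx_def P_def by auto
  qed
  have D': "E' \<beta> = E' \<beta>'" if ag: "\<forall>v. v \<in> lift_vars N l \<and> blk v \<notin> insert i Q \<longrightarrow> \<beta> v = \<beta>' v" for \<beta> \<beta>'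
  proof -
    have agP: "P \<beta> v = P \<beta>' v" if "v \<in> lift_vars N l" "blk v \<notin> Q" for v
      using ag that unfolding P_def by auto
    have "E (P \<beta>) = E (P \<beta>')" using gD agP by blast
    then have hheq: "hh (P \<beta>) = hh (P \<beta>')" unfolding hh_def by simp
    have "E (fx \<beta>) = E (fx \<beta>')" using gD[of "fx \<beta>" "fx \<beta>'"] agP hheq unfolding fx_def by auto
    then show ?thesis unfolding E'_def .
  qed
  have E': "E' \<beta> (Y i' t) = (\<rho>(i:=b)) i'"
    if i': "i' \<in> insert i Q" and t: "t < 2 ^ l" and enc: "\<forall>j<l. E' \<beta> (X i' j) = odd (t div 2 ^ j)" for i' \<beta> t
  proof (cases "i' \<in> Q")
    case True
    then have "i' \<noteq> i" using iQ by auto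
    then show ?thesis using gE[OF True t, of "fx \<beta>"] enc True unfolding E'_def by auto
  next
    case False
    then have ii: "i' = i" using i' by auto
    have Yin: "Y i t \<in> lift_vars N l" "blk (Y i t) \<notin> Q" using t iQ by auto
    have v1: "E' \<beta> (Y i t) = fx \<beta> (Y i t)" unfolding E'_def using gC[OF Yin] .
    show ?thesis
    proof (cases u)
      case (X a j0)
      then have "Y i t \<noteq> u" by auto
      then show ?thesis using v1 ii unfolding fx_def P_def sig_def by auto
    next
      case (Y a j0)
      then have a: "a = i" using u by auto
      show ?thesis
      proof (cases "t = j0")
        case False
        then have "Y i t \<noteq> u" using Y by auto
        then show ?thesis using v1 ii unfolding fx_def P_def sig_def by auto
      next
        case True
        have Xin: "X i 0 \<in> lift_vars N l" "blk (X i 0) \<notin> Q" using l1 iQ by auto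
        have "E' \<beta> (X i 0) = fx \<beta> (X i 0)" unfolding E'_def using gC[OF Xin] .
        also have "\<dots> = (\<not> odd j0)" unfolding fx_def P_def sig_def using Y by auto
        finally have "E' \<beta> (X i 0) = (\<not> odd j0)" .
        moreover have "E' \<beta> (X i 0) = odd (t div 2 ^ 0)" using enc l1 ii by auto
        ultimately show ?thesis using True by simp
      qed
    qed
  qed
  have "good N l (insert i Q) (\<rho>(i:=b)) E'"
    unfolding good_def using A' C' D' E' by blast
  moreover have "range E' \<subseteq> range E" unfolding E'_def by auto
  ultimately show ?thesis using T by blast
qed



lemma finite_lift_vars: "finite (lift_vars N l)"
proof -
  have "lift_vars N l = (\<lambda>(i, j). X i j) ` ({..<N} \<times> {..<l}) \<union> (\<lambda>(i, j). Y i j) ` ({..<N} \<times> {..<2 ^ l})"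
    unfolding lift_vars_def by auto
  then show ?thesis by simp
qed

lemma blk_lt: "v \<in> lift_vars N l \<Longrightarrow> blk v < N"
  by (cases v) auto

lemma sim:
  assumes l1: "1 \<le> l" and h\<phi>: "\<forall>C\<in>\<phi>. fst ` C \<subseteq> {..<N}"
  shows "resx_tree_valid (lift_vars N l) (lift l \<phi>) t \<Longrightarrow> good N l Q \<rho> E \<Longrightarrow> range E \<subseteq> root t \<Longrightarrow>
    \<exists>s. res_tree_valid \<phi> s \<and> psize s \<le> psize t \<and> (\<forall>(i, b)\<in>root s. i \<in> Q \<and> \<rho> i = (\<not> b))"
proof (induction t arbitrary: Q \<rho> E)
  case (Ax S)
  obtain D where D: "D \<in> lift l \<phi>" "S = falsif (lift_vars N l) D" using Ax.prems(1) by auto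
  obtain C \<tau> where C: "D = lift_clause l C \<tau>" "C \<in> \<phi>" "\<tau> \<in> C \<rightarrow>\<^sub>E {..<2 ^ l}"
    using D(1) unfolding lift_def by blast
  have gC: "\<And>\<beta> v. v \<in> lift_vars N l \<Longrightarrow> blk v \<notin> Q \<Longrightarrow> E \<beta> v = \<beta> v"
    and gE: "\<And>i \<beta> t. i \<in> Q \<Longrightarrow> t < 2 ^ l \<Longrightarrow> (\<forall>j<l. E \<beta> (X i j) = odd (t div 2 ^ j)) \<Longrightarrow> E \<beta> (Y i t) = \<rho> i"
    using goodD[OF Ax.prems(2)] by blast+
  have lits: "i \<in> Q \<and> \<rho> i = (\<not> b)" if ib: "(i, b) \<in> C" for i b
  proof -
    define \<beta>0 where "\<beta>0 = (\<lambda>v::lvar. b)"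
    have fa: "E \<beta>0 \<in> falsif (lift_vars N l) D" using Ax.prems(3) D(2) by auto
    have t: "\<tau> (i, b) < 2 ^ l" using C(3) ib by auto
    have iN: "i < N" using h\<phi> C(2) ib by force
    have yD: "(Y i (\<tau> (i, b)), b) \<in> D" unfolding C(1) lift_clause_def using ib by force
    have xD: "(X i j, \<not> odd (\<tau> (i, b) div 2 ^ j)) \<in> D" if "j < l" for j
      unfolding C(1) lift_clause_def using ib that by force
    have ny: "E \<beta>0 (Y i (\<tau> (i, b))) \<noteq> b" using fa yD unfolding falsif_def sat_lit_def by auto
    have nx: "\<forall>j<l. E \<beta>0 (X i j) = odd (\<tau> (i, b) div 2 ^ j)"
      using fa xD unfolding falsif_def sat_lit_def by fastforce
    show ?thesis
    proof (cases "i \<in> Q")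
      case False
      then have "E \<beta>0 (Y i (\<tau> (i, b))) = b" using gC[of "Y i (\<tau> (i, b))" \<beta>0] t iN unfolding \<beta>0_def by simp
      then show ?thesis using ny by simp
    next
      case True
      then show ?thesis using gE[OF True t nx] ny by auto
    qed
  qed
  show ?case
    by (rule exI[of _ "Ax C"]) (use C(2) lits in auto)
next
  case (Der S t1 t2)
  have v1: "resx_tree_valid (lift_vars N l) (lift l \<phi>) t1" and v2: "resx_tree_valid (lift_vars N l) (lift l \<phi>) t2"
    and cov: "S \<subseteq> root t1 \<union> root t2" using Der.prems(1) by auto
  have R: "range E \<subseteq> root t1 \<union> root t2" using Der.prems(3) cov by auto
  have c1: "closed3 (root t1)" and c2: "closed3 (root t2)"
    using valid_closed3[OF finite_lift_vars] v1 v2 by blast+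
  have good: "good N l Q \<rho> E" by fact
  have gA: "add3 E"
    and gD: "\<And>\<beta> \<beta>'. (\<And>v. v \<in> lift_vars N l \<Longrightarrow> blk v \<notin> Q \<Longrightarrow> \<beta> v = \<beta>' v) \<Longrightarrow> E \<beta> = E \<beta>'"
    using goodD[OF good] by blast+
  show ?case
  proof (cases "range E \<subseteq> root t1")
    case True
    then obtain s where "res_tree_valid \<phi> s \<and> psize s \<le> psize t1 \<and> (\<forall>(i, b)\<in>root s. i \<in> Q \<and> \<rho> i = (\<not> b))"
      using Der.IH(1)[OF v1 good] by blast
    then show ?thesis by (intro exI[of _ s]) auto
  next
    case n1: False
    show ?thesis
    proof (cases "range E \<subseteq> root t2")
      case True
      then obtain s where "res_tree_valid \<phi> s \<and> psize s \<le> psize t2 \<and> (\<forall>(i, b)\<in>root s. i \<in> Q \<and> \<rho> i = (\<not> b))"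
        using Der.IH(2)[OF v2 good] by blast
      then show ?thesis by (intro exI[of _ s]) auto
    next
      case n2: False
      define H where "H = (\<lambda>\<alpha>. \<alpha> \<in> root t1)"
      have cv: "hadd3 (\<lambda>\<beta>. H (E \<beta>))" "\<forall>\<beta>. E \<beta> \<in> root t1 \<longleftrightarrow> E \<beta> \<notin> root t2"
        using cover[OF gA R c1 c2 n1 n2] unfolding H_def by auto
      obtain \<beta>1 where b1: "\<not> H (E \<beta>1)" using n1 unfolding H_def by auto
      obtain \<beta>2 where b2: "H (E \<beta>2)" using n2 cv(2) unfolding H_def by auto
      define r where "r \<beta> = (\<lambda>v. if v \<in> lift_vars N l \<and> blk v \<notin> Q then \<beta> v else False)" for \<beta> :: "lvar \<Rightarrow> bool"
      have Er: "E (r \<beta>) = E \<beta>" for \<beta> by (rule gD) (simp add: r_def)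
      define Dv where "Dv = {v \<in> lift_vars N l. blk v \<notin> Q}"
      have fD: "finite Dv" unfolding Dv_def using finite_lift_vars by simp
      have "\<exists>u\<in>Dv. \<exists>\<delta>. H (E (flip u \<delta>)) \<noteq> H (E \<delta>)"
      proof -
        have ne: "H (E (r \<beta>1)) \<noteq> H (E (r \<beta>2))" using Er b1 b2 by simp
        have ag: "\<forall>v. v \<notin> Dv \<longrightarrow> r \<beta>1 v = r \<beta>2 v" by (simp add: r_def Dv_def)
        show ?thesis using path[OF fD ag, where h = "\<lambda>\<beta>. H (E \<beta>)"] ne by simp
      qed
      then obtain u \<delta> where u: "u \<in> Dv" "H (E (flip u \<delta>)) \<noteq> H (E \<delta>)" by blast
      have fl: "\<forall>\<beta>. H (E (flip u \<beta>)) \<noteq> H (E \<beta>)"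
        using flip_all[OF cv(1), of u \<delta>] u(2) by blast
      define i where "i = blk u"
      have iQ: "i \<notin> Q" "i < N" using u(1) blk_lt unfolding Dv_def i_def by auto
      have uZ: "u \<in> lift_vars N l" using u(1) unfolding Dv_def by auto
      obtain E0 where E0: "good N l (insert i Q) (\<rho>(i:=False)) E0" "\<forall>\<beta>. H (E0 \<beta>) = True" "range E0 \<subseteq> range E"
        using step[OF good iQ l1 i_def[symmetric] uZ cv(1) fl, of False True] by blast
      obtain E1 where E1: "good N l (insert i Q) (\<rho>(i:=True)) E1" "\<forall>\<beta>. H (E1 \<beta>) = False" "range E1 \<subseteq> range E"
        using step[OF good iQ l1 i_def[symmetric] uZ cv(1) fl, of True False] by blast
      have r0: "range E0 \<subseteq> root t1" using E0(2) unfolding H_def by auto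
      have r1: "range E1 \<subseteq> root t2"
      proof
        fix \<alpha> assume a: "\<alpha> \<in> range E1"
        then obtain \<gamma> where "\<alpha> = E \<gamma>" using E1(3) by blast
        moreover have "\<alpha> \<notin> root t1" using a E1(2) unfolding H_def by auto
        ultimately show "\<alpha> \<in> root t2" using cv(2) by auto
      qed
      obtain s1 where s1: "res_tree_valid \<phi> s1" "psize s1 \<le> psize t1"
        "\<forall>(i', b)\<in>root s1. i' \<in> insert i Q \<and> (\<rho>(i:=False)) i' = (\<not> b)"
        using Der.IH(1)[OF v1 E0(1) r0] by blast
      obtain s2 where s2: "res_tree_valid \<phi> s2" "psize s2 \<le> psize t2"
        "\<forall>(i', b)\<in>root s2. i' \<in> insert i Q \<and> (\<rho>(i:=True)) i' = (\<not> b)"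
        using Der.IH(2)[OF v2 E1(1) r1] by blast
      have o1: "i' \<in> Q \<and> \<rho> i' = (\<not> b)" if "(i', b) \<in> root s1" "(i', b) \<noteq> (i, True)" for i' b
        using s1(3) that by (cases "i' = i") auto
      have o2: "i' \<in> Q \<and> \<rho> i' = (\<not> b)" if "(i', b) \<in> root s2" "(i', b) \<noteq> (i, False)" for i' b
        using s2(3) that by (cases "i' = i") auto
      show ?thesis
      proof (cases "(i, True) \<in> root s1")
        case False
        have "\<forall>(i', b)\<in>root s1. i' \<in> Q \<and> \<rho> i' = (\<not> b)"
        proof (clarify)
          fix i' b assume m: "(i', b) \<in> root s1"
          then have "(i', b) \<noteq> (i, True)" using False by (cases b) auto
          then show "i' \<in> Q \<and> \<rho> i' = (\<not> b)" using o1 m by blast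
        qed
        moreover have "psize s1 \<le> psize (Der S t1 t2)" using s1(2) by simp
        ultimately show ?thesis using s1(1) by blast
      next
        case T1: True
        show ?thesis
        proof (cases "(i, False) \<in> root s2")
          case False
          have "\<forall>(i', b)\<in>root s2. i' \<in> Q \<and> \<rho> i' = (\<not> b)"
          proof (clarify)
            fix i' b assume m: "(i', b) \<in> root s2"
            then have "(i', b) \<noteq> (i, False)" using False by (cases b) auto
            then show "i' \<in> Q \<and> \<rho> i' = (\<not> b)" using o2 m by blast
          qed
          moreover have "psize s2 \<le> psize (Der S t1 t2)" using s2(2) by simp
          ultimately show ?thesis using s2(1) by blast
        next
          case T2: True
          define Dc where "Dc = (root s1 - {(i, True)}) \<union> (root s2 - {(i, False)})"
          have "resolvent (root s1) (root s2) Dc"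
            unfolding resolvent_def Dc_def
            by (rule exI[of _ "root s1 - {(i, True)}"], rule exI[of _ "root s2 - {(i, False)}"], rule exI[of _ i])
               (use T1 T2 in auto)
          then have "res_tree_valid \<phi> (Der Dc s1 s2)" using s1 s2 by simp
          moreover have "psize (Der Dc s1 s2) \<le> psize (Der S t1 t2)" using s1 s2 by simp
          moreover have "\<forall>(i', b)\<in>root (Der Dc s1 s2). i' \<in> Q \<and> \<rho> i' = (\<not> b)"
          proof (clarify)
            fix i' b assume "(i', b) \<in> root (Der Dc s1 s2)"
            then have "((i', b) \<in> root s1 \<and> (i', b) \<noteq> (i, True)) \<or> ((i', b) \<in> root s2 \<and> (i', b) \<noteq> (i, False))"
              unfolding Dc_def by auto
            then show "i' \<in> Q \<and> \<rho> i' = (\<not> b)" using o1 o2 by blast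
          qed
          ultimately show ?thesis by blast
        qed
      qed
    qed
  qed
qed



lemma addr_exists: "\<exists>t::nat. t < 2 ^ l \<and> (\<forall>j<l. odd (t div 2 ^ j) = f j)"
proof (induction l arbitrary: f)
  case 0
  then show ?case by auto
next
  case (Suc l)
  obtain t' :: nat where t': "t' < 2 ^ l" "\<forall>j<l. odd (t' div 2 ^ j) = f (Suc j)"
    using Suc.IH[of "\<lambda>j. f (Suc j)"] by blast
  define t :: nat where "t = of_bool (f 0) + 2 * t'"
  have "t < 2 ^ Suc l" using t'(1) unfolding t_def by (cases "f 0") auto
  moreover have "odd (t div 2 ^ j) = f j" if "j < Suc l" for j
  proof (cases j)
    case 0
    then show ?thesis unfolding t_def by (cases "f 0") auto
  next
    case (Suc j')
    have "t div 2 ^ j = t div 2 div 2 ^ j'" using Suc by (simp add: div_mult2_eq)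
    also have "t div 2 = t'" unfolding t_def by (cases "f 0") auto
    finally show ?thesis using t'(2) Suc that by auto
  qed
  ultimately show ?case by blast
qed

lemma point_falsified:
  assumes uns: "\<not> satisfiable \<phi>" and a: "\<alpha> \<in> cube (lift_vars N l)"
  shows "\<exists>D\<in>lift l \<phi>. \<alpha> \<in> falsif (lift_vars N l) D"
proof -
  define adr :: "nat \<Rightarrow> nat" where "adr i = (SOME t. t < 2 ^ l \<and> (\<forall>j<l. odd (t div 2 ^ j) = \<alpha> (X i j)))" for i
  have adr: "adr i < 2 ^ l \<and> (\<forall>j<l. odd (adr i div 2 ^ j) = \<alpha> (X i j))" for i
    unfolding adr_def by (rule someI_ex) (rule addr_exists)
  define a where "a i = \<alpha> (Y i (adr i))" for i
  obtain C where C: "C \<in> \<phi>" "\<forall>lt\<in>C. \<not> sat_lit a lt"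
    using uns unfolding satisfiable_def by blast
  define \<tau> where "\<tau> = restrict (\<lambda>lt. adr (fst lt)) C"
  have \<tau>: "\<tau> \<in> C \<rightarrow>\<^sub>E {..<2 ^ l}" unfolding \<tau>_def using adr by auto
  have "lift_clause l C \<tau> \<in> lift l \<phi>" unfolding lift_def using C(1) \<tau> by blast
  moreover have "\<alpha> \<in> falsif (lift_vars N l) (lift_clause l C \<tau>)"
    unfolding falsif_def lift_clause_def using a C(2) adr
    by (auto simp: \<tau>_def sat_lit_def a_def) (metis adr)
  ultimately show ?thesis by blast
qed

lemma affine_fix:
  assumes "V \<subseteq> Z"
  shows "affine_sub Z {\<alpha> \<in> cube Z. \<forall>v\<in>V. \<alpha> v = \<alpha>0 v}"
proof -
  define E where "E = (\<lambda>v. ({v}, \<alpha>0 v)) ` V"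
  have c: "odd (card {v'\<in>{v}. \<alpha> v'}) = \<alpha> v" for \<alpha> :: "'a \<Rightarrow> bool" and v
  proof -
    have "{v'\<in>{v}. \<alpha> v'} = (if \<alpha> v then {v} else {})" by auto
    then show ?thesis by simp
  qed
  have "(\<forall>(U, c)\<in>E. U \<subseteq> Z)" using assms unfolding E_def by auto
  moreover have "{\<alpha> \<in> cube Z. \<forall>v\<in>V. \<alpha> v = \<alpha>0 v} = {\<alpha> \<in> cube Z. \<forall>(U, c)\<in>E. odd (card {v\<in>U. \<alpha> v}) = c}"
    unfolding E_def using c by auto
  ultimately show ?thesis unfolding affine_sub_def by blast
qed

lemma subcube:
  assumes F: "\<forall>\<alpha>\<in>cube Z. \<exists>D\<in>F. \<alpha> \<in> falsif Z D"
  shows "finite W \<Longrightarrow> W \<subseteq> Z \<Longrightarrow> \<alpha>0 \<in> cube Z \<Longrightarrow>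
    \<exists>t. resx_tree_valid Z F t \<and> root t = {\<alpha> \<in> cube Z. \<forall>v\<in>Z - W. \<alpha> v = \<alpha>0 v}"
proof (induction W arbitrary: \<alpha>0 rule: finite_induct)
  case empty
  obtain D where D: "D \<in> F" "\<alpha>0 \<in> falsif Z D" using F empty by blast
  define K where "K = {\<alpha> \<in> cube Z. \<forall>v\<in>Z - {}. \<alpha> v = \<alpha>0 v}"
  have "K \<subseteq> {\<alpha>0}"
  proof
    fix \<alpha> assume "\<alpha> \<in> K"
    then have aK: "\<alpha> \<in> cube Z" "\<forall>v\<in>Z. \<alpha> v = \<alpha>0 v" unfolding K_def by auto
    have "\<alpha> v = \<alpha>0 v" for v
    proof (cases "v \<in> Z")
      case True then show ?thesis using aK by blast
    next
      case False then show ?thesis using aK(1) empty(2) unfolding cube_def by blast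
    qed
    then have "\<alpha> = \<alpha>0" by (rule ext)
    then show "\<alpha> \<in> {\<alpha>0}" by simp
  qed
  then have "K \<subseteq> falsif Z D \<union> falsif Z D" using D by auto
  moreover have "affine_sub Z K" unfolding K_def by (rule affine_fix) auto
  ultimately have "resx_tree_valid Z F (Der K (Ax (falsif Z D)) (Ax (falsif Z D)))" using D by auto
  then show ?case unfolding K_def by fastforce
next
  case (insert w W)
  have w: "w \<in> Z" "W \<subseteq> Z" using insert.prems by auto
  have a0: "\<alpha>0(w := False) \<in> cube Z" "\<alpha>0(w := True) \<in> cube Z" using insert.prems(2) w unfolding cube_def by auto
  obtain t1 where t1: "resx_tree_valid Z F t1" "root t1 = {\<alpha> \<in> cube Z. \<forall>v\<in>Z - W. \<alpha> v = (\<alpha>0(w := False)) v}"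
    using insert.IH[OF w(2) a0(1)] by blast
  obtain t2 where t2: "resx_tree_valid Z F t2" "root t2 = {\<alpha> \<in> cube Z. \<forall>v\<in>Z - W. \<alpha> v = (\<alpha>0(w := True)) v}"
    using insert.IH[OF w(2) a0(2)] by blast
  define K where "K = {\<alpha> \<in> cube Z. \<forall>v\<in>Z - insert w W. \<alpha> v = \<alpha>0 v}"
  have "K \<subseteq> root t1 \<union> root t2"
  proof
    fix \<alpha> assume "\<alpha> \<in> K"
    then show "\<alpha> \<in> root t1 \<union> root t2" unfolding t1(2) t2(2) K_def using insert(2)
      by (cases "\<alpha> w") auto
  qed
  moreover have "affine_sub Z K" unfolding K_def by (rule affine_fix) auto
  ultimately have "resx_tree_valid Z F (Der K t1 t2)" using t1 t2 by auto
  then show ?case unfolding K_def by fastforce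
qed

lemma resx_exists:
  assumes "\<not> satisfiable \<phi>"
  shows "\<exists>t. resx_tree_valid (lift_vars N l) (lift l \<phi>) t \<and> root t = cube (lift_vars N l)"
proof -
  have z: "(\<lambda>v. False) \<in> cube (lift_vars N l)" unfolding cube_def by auto
  obtain t where "resx_tree_valid (lift_vars N l) (lift l \<phi>) t"
    "root t = {\<alpha> \<in> cube (lift_vars N l). \<forall>v\<in>lift_vars N l - lift_vars N l. \<alpha> v = False}"
  proof -
    have fa: "\<forall>\<alpha>\<in>cube (lift_vars N l). \<exists>D\<in>lift l \<phi>. \<alpha> \<in> falsif (lift_vars N l) D"
      using point_falsified[OF assms] by blast
    show "(\<And>t. resx_tree_valid (lift_vars N l) (lift l \<phi>) t \<Longrightarrow>
      root t = {\<alpha> \<in> cube (lift_vars N l). \<forall>v\<in>lift_vars N l - lift_vars N l. \<alpha> v = False} \<Longrightarrow> thesis) \<Longrightarrow> thesis"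
      using subcube[OF fa finite_lift_vars subset_refl z] by blast
  qed
  then show ?thesis by auto
qed

lemma good_init: "good N l {} \<rho> (\<lambda>\<beta> v. v \<in> lift_vars N l \<and> \<beta> v)"
  unfolding good_def add3_def x3_def by (auto intro!: ext)

lemma sim_root:
  assumes l1: "1 \<le> l" and h\<phi>: "\<forall>C\<in>\<phi>. fst ` C \<subseteq> {..<N}"
    and t: "resx_tree_valid (lift_vars N l) (lift l \<phi>) t" "root t = cube (lift_vars N l)"
  shows "\<exists>s. res_tree_valid \<phi> s \<and> root s = {} \<and> psize s \<le> psize t"
proof -
  have r: "range (\<lambda>\<beta> v. v \<in> lift_vars N l \<and> \<beta> v) \<subseteq> root t" using t(2) unfolding cube_def by auto
  obtain s where s: "res_tree_valid \<phi> s" "psize s \<le> psize t" "\<forall>(i, b)\<in>root s. i \<in> {} \<and> (\<lambda>_. False) i = (\<not> b)"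
    using sim[OF l1 h\<phi> t(1) good_init r] by blast
  have "root s = {}" using s(3) by auto
  then show ?thesis using s by blast
qed

lemma main_tree:
  assumes l1: "1 \<le> l" and h\<phi>: "\<forall>C\<in>\<phi>. fst ` C \<subseteq> {..<N}" and uns: "\<not> satisfiable \<phi>"
  shows "tree_Res \<phi> \<le> tree_ResX (lift_vars N l) (lift l \<phi>)"
    and "\<exists>s. res_tree_valid \<phi> s \<and> root s = {}"
proof -
  let ?P = "\<lambda>s. \<exists>t. resx_tree_valid (lift_vars N l) (lift l \<phi>) t \<and> root t = cube (lift_vars N l) \<and> psize t = s"
  obtain t0 where t0: "resx_tree_valid (lift_vars N l) (lift l \<phi>) t0" "root t0 = cube (lift_vars N l)"
    using resx_exists[OF uns] by blast
  have "?P (Least ?P)" by (rule LeastI_ex) (use t0 in blast)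
  then obtain t where t: "resx_tree_valid (lift_vars N l) (lift l \<phi>) t" "root t = cube (lift_vars N l)"
    "psize t = tree_ResX (lift_vars N l) (lift l \<phi>)" unfolding tree_ResX_def by blast
  obtain s where s: "res_tree_valid \<phi> s" "root s = {}" "psize s \<le> psize t"
    using sim_root[OF l1 h\<phi> t(1,2)] by blast
  have "tree_Res \<phi> \<le> psize s" unfolding tree_Res_def by (rule Least_le) (use s in blast)
  then show "tree_Res \<phi> \<le> tree_ResX (lift_vars N l) (lift l \<phi>)" using s t by simp
  show "\<exists>s. res_tree_valid \<phi> s \<and> root s = {}" using s by blast
qed



definition restr :: "'v cnf \<Rightarrow> 'v \<Rightarrow> bool \<Rightarrow> 'v cnf" where
  "restr F v b = {C - {(v, \<not> b)} | C. C \<in> F \<and> (v, b) \<notin> C}"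

lemma tree_restr:
  "res_tree_valid F t \<Longrightarrow> (v, b) \<in> root t \<or>
    (\<exists>t'. res_tree_valid (restr F v b) t' \<and> root t' \<subseteq> root t - {(v, \<not> b)} \<and> psize t' \<le> psize t)"
proof (induction t)
  case (Ax C)
  show ?case
  proof (cases "(v, b) \<in> C")
    case False
    then have "res_tree_valid (restr F v b) (Ax (C - {(v, \<not> b)}))" using Ax unfolding restr_def by auto
    then show ?thesis by (intro disjI2 exI[of _ "Ax (C - {(v, \<not> b)})"]) auto
  qed simp
next
  case (Der D t1 t2)
  have v1: "res_tree_valid F t1" and v2: "res_tree_valid F t2" and r: "resolvent (root t1) (root t2) D"
    using Der.prems by auto
  obtain A B z where ABz: "root t1 = A \<union> {(z, True)}" "root t2 = B \<union> {(z, False)}" "D = A \<union> B"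
    using r unfolding resolvent_def by blast
  note IH1 = Der.IH(1)[OF v1] and IH2 = Der.IH(2)[OF v2]
  show ?case
  proof (cases "z = v")
    case zv: True
    show ?thesis
    proof (cases b)
      case True
      from IH2 show ?thesis
      proof
        assume "(v, b) \<in> root t2" then show ?thesis using True ABz zv by auto
      next
        assume "\<exists>t'. res_tree_valid (restr F v b) t' \<and> root t' \<subseteq> root t2 - {(v, \<not> b)} \<and> psize t' \<le> psize t2"
        then obtain t' where "res_tree_valid (restr F v b) t'" "root t' \<subseteq> root t2 - {(v, \<not> b)}" "psize t' \<le> psize t2" by blast
        then show ?thesis using True ABz zv by (intro disjI2 exI[of _ t']) auto
      qed
    next
      case False
      from IH1 show ?thesis
      proof
        assume "(v, b) \<in> root t1" then show ?thesis using False ABz zv by auto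
      next
        assume "\<exists>t'. res_tree_valid (restr F v b) t' \<and> root t' \<subseteq> root t1 - {(v, \<not> b)} \<and> psize t' \<le> psize t1"
        then obtain t' where "res_tree_valid (restr F v b) t'" "root t' \<subseteq> root t1 - {(v, \<not> b)}" "psize t' \<le> psize t1" by blast
        then show ?thesis using False ABz zv by (intro disjI2 exI[of _ t']) auto
      qed
    qed
  next
    case zv: False
    show ?thesis
    proof (cases "(v, b) \<in> root t1 \<or> (v, b) \<in> root t2")
      case True
      then show ?thesis using ABz zv by auto
    next
      case False
      obtain t1' where t1': "res_tree_valid (restr F v b) t1'" "root t1' \<subseteq> root t1 - {(v, \<not> b)}" "psize t1' \<le> psize t1"
        using IH1 False by blast
      obtain t2' where t2': "res_tree_valid (restr F v b) t2'" "root t2' \<subseteq> root t2 - {(v, \<not> b)}" "psize t2' \<le> psize t2"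
        using IH2 False by blast
      show ?thesis
      proof (cases "(z, True) \<in> root t1'")
        case False
        then show ?thesis using t1' ABz by (intro disjI2 exI[of _ t1']) auto
      next
        case T1: True
        show ?thesis
        proof (cases "(z, False) \<in> root t2'")
          case False
          then show ?thesis using t2' ABz by (intro disjI2 exI[of _ t2']) auto
        next
          case T2: True
          define D' where "D' = (root t1' - {(z, True)}) \<union> (root t2' - {(z, False)})"
          have "resolvent (root t1') (root t2') D'" unfolding resolvent_def D'_def
            by (rule exI[of _ "root t1' - {(z, True)}"], rule exI[of _ "root t2' - {(z, False)}"], rule exI[of _ z])
               (use T1 T2 in auto)
          then have "res_tree_valid (restr F v b) (Der D' t1' t2')" using t1' t2' by simp
          moreover have "D' \<subseteq> D - {(v, \<not> b)}" using t1'(2) t2'(2) ABz unfolding D'_def by auto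
          moreover have "psize (Der D' t1' t2') \<le> psize (Der D t1 t2)" using t1' t2' by simp
          ultimately show ?thesis by (intro disjI2 exI[of _ "Der D' t1' t2'"]) auto
        qed
      qed
    qed
  qed
qed

inductive der :: "nat \<Rightarrow> 'v cnf \<Rightarrow> 'v clause \<Rightarrow> bool" for w F where
  ax: "C \<in> F \<Longrightarrow> card C \<le> w \<Longrightarrow> der w F C"
| res: "der w F C1 \<Longrightarrow> der w F C2 \<Longrightarrow> resolvent C1 C2 D \<Longrightarrow> card D \<le> w \<Longrightarrow> der w F D"

lemma der_mono: "der w F C \<Longrightarrow> w \<le> w' \<Longrightarrow> der w' F C"
  by (induction rule: der.induct) (auto intro: der.intros)

lemma der_subst: "der w' G D \<Longrightarrow> (\<forall>C\<in>G. der w F C) \<Longrightarrow> der (max w w') F D"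
proof (induction rule: der.induct)
  case (ax C)
  then show ?case using der_mono by fastforce
next
  case (res C1 C2 D)
  then show ?case by (auto intro: der.res)
qed

lemma restr_vfree: "der w (restr F v b) C \<Longrightarrow> (v, True) \<notin> C \<and> (v, False) \<notin> C"
proof (induction rule: der.induct)
  case (ax C)
  then show ?case unfolding restr_def by (cases b) auto
next
  case (res C1 C2 D)
  then show ?case unfolding resolvent_def by blast
qed

lemma card_insert_le_Suc: "card (insert x D) \<le> Suc (card D)"
  by (cases "finite D") (auto simp: card_insert_if)

lemma lift_der: "der w (restr F v b) C \<Longrightarrow> \<exists>C'. der (Suc w) F C' \<and> (C' = C \<or> C' = insert (v, \<not> b) C)"
proof (induction rule: der.induct)
  case (ax C)
  then obtain C0 where C0: "C = C0 - {(v, \<not> b)}" "C0 \<in> F" "(v, b) \<notin> C0" unfolding restr_def by blast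
  have e: "C0 = C \<or> C0 = insert (v, \<not> b) C" using C0(1) by blast
  have "card C0 \<le> Suc w" using e ax(2) card_insert_le_Suc[of "(v, \<not> b)" C] by auto
  then show ?case using der.ax[OF C0(2)] e by blast
next
  case (res C1 C2 D)
  obtain C1' where C1': "der (Suc w) F C1'" "C1' = C1 \<or> C1' = insert (v, \<not> b) C1" using res.IH(1) by blast
  obtain C2' where C2': "der (Suc w) F C2'" "C2' = C2 \<or> C2' = insert (v, \<not> b) C2" using res.IH(2) by blast
  obtain A B z where ABz: "C1 = A \<union> {(z, True)}" "C2 = B \<union> {(z, False)}" "D = A \<union> B"
    using res.hyps(3) unfolding resolvent_def by blast
  have zv: "z \<noteq> v" using restr_vfree[OF res.hyps(1)] ABz(1) by auto
  define A' where "A' = A \<union> (C1' - C1)"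
  define B' where "B' = B \<union> (C2' - C2)"
  have e1: "C1' = A' \<union> {(z, True)}" using C1'(2) ABz(1) unfolding A'_def by auto
  have e2: "C2' = B' \<union> {(z, False)}" using C2'(2) ABz(2) unfolding B'_def by auto
  have "resolvent C1' C2' (A' \<union> B')" unfolding resolvent_def
    by (rule exI[of _ A'], rule exI[of _ B'], rule exI[of _ z]) (use e1 e2 in simp)
  moreover have e: "A' \<union> B' = D \<or> A' \<union> B' = insert (v, \<not> b) D"
  proof -
    have s1: "D \<subseteq> A' \<union> B'" unfolding A'_def B'_def ABz(3) by blast
    have s2: "A' \<union> B' \<subseteq> insert (v, \<not> b) D" unfolding A'_def B'_def ABz(3) using C1'(2) C2'(2) by auto
    show ?thesis
    proof (cases "(v, \<not> b) \<in> A' \<union> B'")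
      case True then show ?thesis using s1 s2 by blast
    next
      case False then show ?thesis using s1 s2 by blast
    qed
  qed
  moreover have "card (A' \<union> B') \<le> Suc w" using e res.hyps(4) card_insert_le_Suc[of "(v, \<not> b)" D] by auto
  ultimately show ?case using der.res[OF C1'(1) C2'(1)] by blast
qed

lemma combine:
  assumes d0: "der w0 (restr F z b) {}" and d1: "der w1 (restr F z (\<not> b)) {}" and k: "\<forall>C\<in>F. card C \<le> k"
  shows "der (max (Suc w0) (max k w1)) F {}"
proof -
  obtain C' where C': "der (Suc w0) F C'" "C' = {} \<or> C' = {(z, \<not> b)}" using lift_der[OF d0] by auto
  show ?thesis
  proof (cases "C' = {}")
    case True
    then show ?thesis using C' der_mono by fastforce
  next
    case False
    then have dz: "der (Suc w0) F {(z, \<not> b)}" using C' by auto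
    have all: "\<forall>C\<in>restr F z (\<not> b). der (max (Suc w0) k) F C"
    proof
      fix C assume "C \<in> restr F z (\<not> b)"
      then obtain C0 where C0: "C = C0 - {(z, b)}" "C0 \<in> F" "(z, \<not> b) \<notin> C0" unfolding restr_def by auto
      have cC: "card C \<le> k" using k C0 card_Diff1_le[of C0 "(z, b)"] by fastforce
      show "der (max (Suc w0) k) F C"
      proof (cases "(z, b) \<in> C0")
        case False
        then have "C = C0" using C0 by auto
        then show ?thesis using der.ax[OF C0(2)] k C0(2) by auto
      next
        case True
        have a0: "der (max (Suc w0) k) F C0" using der.ax[OF C0(2)] k C0(2) by auto
        have a1: "der (max (Suc w0) k) F {(z, \<not> b)}" using der_mono[OF dz] by auto
        have r: "resolvent C0 {(z, \<not> b)} C \<or> resolvent {(z, \<not> b)} C0 C"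
        proof (cases b)
          case bT: True
          have "C0 = (C0 - {(z, True)}) \<union> {(z, True)}" using True bT by auto
          moreover have "C = (C0 - {(z, True)}) \<union> {}" using C0(1) bT by simp
          ultimately have "resolvent C0 {(z, \<not> b)} C" unfolding resolvent_def using bT
            by (intro exI[of _ "C0 - {(z, True)}"] exI[of _ "{}"] exI[of _ z]) simp
          then show ?thesis by blast
        next
          case bF: False
          have "C0 = (C0 - {(z, False)}) \<union> {(z, False)}" using True bF by auto
          moreover have "C = {} \<union> (C0 - {(z, False)})" using C0(1) bF by simp
          ultimately have "resolvent {(z, \<not> b)} C0 C" unfolding resolvent_def using bF
            by (intro exI[of _ "{}"] exI[of _ "C0 - {(z, False)}"] exI[of _ z]) simp
          then show ?thesis by blast
        qed
        have "card C \<le> max (Suc w0) k" using cC by auto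
        then show ?thesis using r der.res[OF a0 a1] der.res[OF a1 a0] by blast
      qed
    qed
    have "der (max (max (Suc w0) k) w1) F {}" using der_subst[OF d1 all] .
    then show ?thesis by (simp add: max.assoc max.left_commute)
  qed
qed

lemma restr_props:
  assumes a: "\<forall>C\<in>F. finite C \<and> card C \<le> k"
  shows "\<forall>C\<in>restr F v b. finite C \<and> card C \<le> k"
proof
  fix C assume "C \<in> restr F v b"
  then obtain C0 where C0: "C = C0 - {(v, \<not> b)}" "C0 \<in> F" unfolding restr_def by blast
  have "finite C0" "card C0 \<le> k" using a C0(2) by auto
  moreover have "card C \<le> card C0" unfolding C0(1) by (rule card_Diff1_le)
  ultimately show "finite C \<and> card C \<le> k" using C0(1) by simp
qed

lemma bsw:
  "\<forall>C\<in>F. finite C \<and> card C \<le> k \<Longrightarrow> res_tree_valid F t \<Longrightarrow> root t = {} \<Longrightarrow> \<exists>d. der (k + d) F {} \<and> 2 ^ d \<le> psize t"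
proof (induction "psize t" arbitrary: F t rule: less_induct)
  case less
  show ?case
  proof (cases t)
    case (Ax C)
    then have "{} \<in> F" using less.prems by auto
    then have "der (k + 0) F {}" by (auto intro: der.ax)
    then show ?thesis using Ax by (intro exI[of _ 0]) auto
  next
    case (Der D t1 t2)
    have v1: "res_tree_valid F t1" and v2: "res_tree_valid F t2" and r: "resolvent (root t1) (root t2) {}"
      using less.prems Der by auto
    obtain A B z where ABz: "root t1 = A \<union> {(z, True)}" "root t2 = B \<union> {(z, False)}" "{} = A \<union> B"
      using r unfolding resolvent_def by blast
    have z: "root t1 = {(z, True)}" "root t2 = {(z, False)}" using ABz by auto
    obtain t1' where t1': "res_tree_valid (restr F z False) t1'" "root t1' = {}" "psize t1' \<le> psize t1"
      using tree_restr[OF v1, of z False] z by auto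
    obtain t2' where t2': "res_tree_valid (restr F z True) t2'" "root t2' = {}" "psize t2' \<le> psize t2"
      using tree_restr[OF v2, of z True] z by auto
    have p1: "psize t1' < psize t" and p2: "psize t2' < psize t" using t1' t2' Der by auto
    obtain d1 where d1: "der (k + d1) (restr F z False) {}" "2 ^ d1 \<le> psize t1'"
      using less.hyps[OF p1 restr_props[OF less.prems(1)] t1'(1,2)] by blast
    obtain d2 where d2: "der (k + d2) (restr F z True) {}" "2 ^ d2 \<le> psize t2'"
      using less.hyps[OF p2 restr_props[OF less.prems(1)] t2'(1,2)] by blast
    have kF: "\<forall>C\<in>F. card C \<le> k" using less.prems(1) by auto
    have pt: "psize t = Suc (psize t1 + psize t2)" using Der by simp
    show ?thesis
    proof (cases "psize t1 \<le> psize t2")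
      case True
      have "der (max (Suc (k + d1)) (max k (k + d2))) F {}" using combine[of "k + d1" F z False "k + d2" k] d1 d2 kF by simp
      moreover have "max (Suc (k + d1)) (max k (k + d2)) = k + max (Suc d1) d2" by simp
      moreover have "2 ^ max (Suc d1) d2 \<le> psize t"
      proof -
        have "(2::nat) ^ Suc d1 \<le> psize t" using d1(2) t1'(3) True pt by simp
        moreover have "(2::nat) ^ d2 \<le> psize t" using d2(2) t2'(3) pt by simp
        ultimately show ?thesis by (simp add: max_def)
      qed
      ultimately show ?thesis by metis
    next
      case False
      have "der (max (Suc (k + d2)) (max k (k + d1))) F {}" using combine[of "k + d2" F z True "k + d1" k] d1 d2 kF by simp
      moreover have "max (Suc (k + d2)) (max k (k + d1)) = k + max (Suc d2) d1" by simp
      moreover have "2 ^ max (Suc d2) d1 \<le> psize t"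
      proof -
        have "(2::nat) ^ Suc d2 \<le> psize t" using d2(2) t2'(3) False pt by simp
        moreover have "(2::nat) ^ d1 \<le> psize t" using d1(2) t1'(3) pt by simp
        ultimately show ?thesis by (simp add: max_def)
      qed
      ultimately show ?thesis by metis
    qed
  qed
qed

definition vl :: "'v cnf \<Rightarrow> 'v clause list \<Rightarrow> bool" where
  "vl F Cs \<longleftrightarrow> (\<forall>i<length Cs. Cs ! i \<in> F \<or> (\<exists>p<i. \<exists>q<i. resolvent (Cs ! p) (Cs ! q) (Cs ! i)))"

lemma vl_append:
  assumes v1: "vl F Cs1" and v2: "vl F Cs2"
  shows "vl F (Cs1 @ Cs2)"
  unfolding vl_def
proof (intro allI impI)
  fix i assume i: "i < length (Cs1 @ Cs2)"
  have h1: "\<And>i. i < length Cs1 \<Longrightarrow> Cs1 ! i \<in> F \<or> (\<exists>p<i. \<exists>q<i. resolvent (Cs1 ! p) (Cs1 ! q) (Cs1 ! i))"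
    using v1 unfolding vl_def by blast
  have h2: "\<And>i. i < length Cs2 \<Longrightarrow> Cs2 ! i \<in> F \<or> (\<exists>p<i. \<exists>q<i. resolvent (Cs2 ! p) (Cs2 ! q) (Cs2 ! i))"
    using v2 unfolding vl_def by blast
  show "(Cs1 @ Cs2) ! i \<in> F \<or> (\<exists>p<i. \<exists>q<i. resolvent ((Cs1 @ Cs2) ! p) ((Cs1 @ Cs2) ! q) ((Cs1 @ Cs2) ! i))"
  proof (cases "i < length Cs1")
    case True
    have eq: "\<And>j. j < length Cs1 \<Longrightarrow> (Cs1 @ Cs2) ! j = Cs1 ! j" by (simp add: nth_append)
    from h1[OF True] show ?thesis
    proof
      assume "Cs1 ! i \<in> F" then show ?thesis using eq[OF True] by simp
    next
      assume "\<exists>p<i. \<exists>q<i. resolvent (Cs1 ! p) (Cs1 ! q) (Cs1 ! i)"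
      then obtain p q where pq: "p < i" "q < i" "resolvent (Cs1 ! p) (Cs1 ! q) (Cs1 ! i)" by blast
      have "(Cs1 @ Cs2) ! p = Cs1 ! p" "(Cs1 @ Cs2) ! q = Cs1 ! q" using pq True eq by auto
      then show ?thesis using pq eq[OF True] by (intro disjI2 exI[of _ p] conjI exI[of _ q]) auto
    qed
  next
    case False
    define i' where "i' = i - length Cs1"
    have i': "i' < length Cs2" "i = length Cs1 + i'" using i False unfolding i'_def by auto
    from h2[OF i'(1)] show ?thesis
    proof
      assume "Cs2 ! i' \<in> F" then show ?thesis using i' by (simp add: nth_append)
    next
      assume "\<exists>p<i'. \<exists>q<i'. resolvent (Cs2 ! p) (Cs2 ! q) (Cs2 ! i')"
      then obtain p q where pq: "p < i'" "q < i'" "resolvent (Cs2 ! p) (Cs2 ! q) (Cs2 ! i')" by blast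
      have "(Cs1 @ Cs2) ! (length Cs1 + p) = Cs2 ! p" "(Cs1 @ Cs2) ! (length Cs1 + q) = Cs2 ! q"
        "(Cs1 @ Cs2) ! i = Cs2 ! i'" using i' by (simp_all add: nth_append)
      then show ?thesis using pq i' by (intro disjI2 exI[of _ "length Cs1 + p"] conjI exI[of _ "length Cs1 + q"]) auto
    qed
  qed
qed

lemma der_list: "der w F C \<Longrightarrow> \<exists>Cs. Cs \<noteq> [] \<and> last Cs = C \<and> vl F Cs \<and> (\<forall>D\<in>set Cs. card D \<le> w)"
proof (induction rule: der.induct)
  case (ax C)
  then show ?case by (intro exI[of _ "[C]"]) (auto simp: vl_def)
next
  case (res C1 C2 D)
  obtain Cs1 where c1: "Cs1 \<noteq> []" "last Cs1 = C1" "vl F Cs1" "\<forall>D\<in>set Cs1. card D \<le> w" using res.IH(1) by blast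
  obtain Cs2 where c2: "Cs2 \<noteq> []" "last Cs2 = C2" "vl F Cs2" "\<forall>D\<in>set Cs2. card D \<le> w" using res.IH(2) by blast
  define Cs where "Cs = Cs1 @ Cs2"
  have vCs: "vl F Cs" unfolding Cs_def using vl_append c1 c2 by blast
  have len: "0 < length Cs1" "0 < length Cs2" using c1(1) c2(1) by auto
  define p where "p = length Cs1 - 1"
  define q where "q = length Cs1 + length Cs2 - 1"
  have p1: "p < length Cs1" unfolding p_def using len(1) by linarith
  have p: "p < length Cs" "Cs ! p = C1"
  proof -
    show "p < length Cs" using p1 unfolding Cs_def by simp
    have "Cs ! p = Cs1 ! p" using p1 unfolding Cs_def by (simp add: nth_append)
    also have "\<dots> = last Cs1" unfolding p_def using c1(1) by (simp add: last_conv_nth)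
    finally show "Cs ! p = C1" using c1(2) by simp
  qed
  have q1: "q = length Cs1 + (length Cs2 - 1)" unfolding q_def using len by linarith
  have q: "q < length Cs" "Cs ! q = C2"
  proof -
    show "q < length Cs" using q1 len unfolding Cs_def by simp
    have "Cs ! q = Cs2 ! (length Cs2 - 1)" using q1 unfolding Cs_def by (simp add: nth_append)
    also have "\<dots> = last Cs2" using c2(1) by (simp add: last_conv_nth)
    finally show "Cs ! q = C2" using c2(2) by simp
  qed
  have "vl F (Cs @ [D])" unfolding vl_def
  proof (intro allI impI)
    fix i assume i: "i < length (Cs @ [D])"
    show "(Cs @ [D]) ! i \<in> F \<or> (\<exists>p<i. \<exists>q<i. resolvent ((Cs @ [D]) ! p) ((Cs @ [D]) ! q) ((Cs @ [D]) ! i))"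
    proof (cases "i < length Cs")
      case True
      have eq: "\<And>j. j < length Cs \<Longrightarrow> (Cs @ [D]) ! j = Cs ! j" by (simp add: nth_append)
      have "vl F (Cs @ [])" using vCs by simp
      have "Cs ! i \<in> F \<or> (\<exists>p<i. \<exists>q<i. resolvent (Cs ! p) (Cs ! q) (Cs ! i))" using vCs True unfolding vl_def by blast
      then show ?thesis
      proof
        assume "Cs ! i \<in> F" then show ?thesis using eq[OF True] by simp
      next
        assume "\<exists>p<i. \<exists>q<i. resolvent (Cs ! p) (Cs ! q) (Cs ! i)"
        then obtain p q where pq: "p < i" "q < i" "resolvent (Cs ! p) (Cs ! q) (Cs ! i)" by blast
        have "(Cs @ [D]) ! p = Cs ! p" "(Cs @ [D]) ! q = Cs ! q" using pq True eq by auto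
        then show ?thesis using pq eq[OF True] by (intro disjI2 exI[of _ p] conjI exI[of _ q]) auto
      qed
    next
      case False
      then have "i = length Cs" using i by auto
      then show ?thesis using p q res.hyps(3) by (intro disjI2 exI[of _ p] conjI exI[of _ q]) (auto simp: nth_append)
    qed
  qed
  then show ?case using c1 c2 res.hyps(4) by (intro exI[of _ "Cs @ [D]"]) (auto simp: Cs_def)
qed

lemma width_tree:
  assumes "\<forall>C\<in>F. finite C \<and> card C \<le> k" and "\<exists>s. res_tree_valid F s \<and> root s = {}"
  shows "2 powr (real (width_Res F) - real k) \<le> real (tree_Res F)"
proof -
  let ?P = "\<lambda>n. \<exists>t. res_tree_valid F t \<and> root t = {} \<and> psize t = n"
  have "?P (Least ?P)" by (rule LeastI_ex) (use assms(2) in blast)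
  then obtain t where t: "res_tree_valid F t" "root t = {}" "psize t = tree_Res F" unfolding tree_Res_def by blast
  obtain d where d: "der (k + d) F {}" "2 ^ d \<le> psize t" using bsw[OF assms(1) t(1,2)] by blast
  obtain Cs where Cs: "Cs \<noteq> []" "last Cs = {}" "vl F Cs" "\<forall>D\<in>set Cs. card D \<le> k + d" using der_list[OF d(1)] by blast
  have rr: "res_refutation F Cs" using Cs unfolding res_refutation_def vl_def by blast
  have w: "width_Res F \<le> k + d" unfolding width_Res_def by (rule Least_le) (use Cs rr in blast)
  have "2 powr (real (width_Res F) - real k) \<le> 2 powr (real d)" using w by (intro powr_mono) auto
  also have "\<dots> = real (2 ^ d)" by (simp add: powr_realpow)
  also have "\<dots> \<le> real (tree_Res F)" using d(2) t(3) by linarith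
  finally show ?thesis .
qed



lemma Y_mem: "(Y i t, b) \<in> lift_clause l C \<tau> \<longleftrightarrow> (i, b) \<in> C \<and> \<tau> (i, b) = t"
  unfolding lift_clause_def by force

lemma lift_eq: "lift l \<phi> = (\<lambda>(C, \<tau>). lift_clause l C \<tau>) ` (SIGMA C:\<phi>. C \<rightarrow>\<^sub>E {..<2 ^ l})"
  unfolding lift_def by auto

lemma lift_inj: "inj_on (\<lambda>(C, \<tau>). lift_clause l C \<tau>) (SIGMA C:\<phi>. C \<rightarrow>\<^sub>E {..<2 ^ l})"
proof (rule inj_onI, clarify)
  fix C \<tau> C' \<tau>' assume h: "C \<in> \<phi>" "\<tau> \<in> C \<rightarrow>\<^sub>E {..<2 ^ l}" "C' \<in> \<phi>" "\<tau>' \<in> C' \<rightarrow>\<^sub>E {..<2 ^ l}"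
    and e: "lift_clause l C \<tau> = lift_clause l C' \<tau>'"
  have a: "lt \<in> C' \<and> \<tau>' lt = \<tau> lt" if "lt \<in> C" for lt
  proof -
    obtain i b where lt: "lt = (i, b)" by force
    have "(Y i (\<tau> (i, b)), b) \<in> lift_clause l C \<tau>" using that lt Y_mem by blast
    then have "(Y i (\<tau> (i, b)), b) \<in> lift_clause l C' \<tau>'" using e by simp
    then show ?thesis using Y_mem lt by metis
  qed
  have b: "lt \<in> C \<and> \<tau> lt = \<tau>' lt" if "lt \<in> C'" for lt
  proof -
    obtain i b where lt: "lt = (i, b)" by force
    have "(Y i (\<tau>' (i, b)), b) \<in> lift_clause l C' \<tau>'" using that lt Y_mem by blast
    then have "(Y i (\<tau>' (i, b)), b) \<in> lift_clause l C \<tau>" using e by simp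
    then show ?thesis using Y_mem lt by metis
  qed
  have CC: "C = C'" using a b by blast
  have "\<tau> = \<tau>'"
  proof
    fix x show "\<tau> x = \<tau>' x"
    proof (cases "x \<in> C")
      case True then show ?thesis using a by simp
    next
      case False
      have "\<tau> x = undefined" by (rule PiE_arb[OF h(2) False])
      moreover have "\<tau>' x = undefined" using PiE_arb[OF h(4)] False CC by simp
      ultimately show ?thesis by simp
    qed
  qed
  then show "C = C' \<and> \<tau> = \<tau>'" using CC by simp
qed

lemma card_lift_vars: "card (lift_vars N l) = N * (l + 2 ^ l)"
proof -
  have e: "lift_vars N l = (\<lambda>(i, j). X i j) ` ({..<N} \<times> {..<l}) \<union> (\<lambda>(i, j). Y i j) ` ({..<N} \<times> {..<2 ^ l})"
    unfolding lift_vars_def by auto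
  have i1: "inj_on (\<lambda>(i, j). X i j) ({..<N} \<times> {..<l})" by (auto simp: inj_on_def)
  have i2: "inj_on (\<lambda>(i, j). Y i j) ({..<N} \<times> {..<2 ^ l})" by (auto simp: inj_on_def)
  have d: "(\<lambda>(i, j). X i j) ` ({..<N} \<times> {..<l}) \<inter> (\<lambda>(i, j). Y i j) ` ({..<N} \<times> {..<2 ^ l}) = {}" by auto
  have "card (lift_vars N l) = card ((\<lambda>(i, j). X i j) ` ({..<N} \<times> {..<l})) + card ((\<lambda>(i, j). Y i j) ` ({..<N} \<times> {..<2 ^ l}))"
    unfolding e by (rule card_Un_disjoint) (use d in auto)
  also have "\<dots> = N * l + N * 2 ^ l" using card_image[OF i1] card_image[OF i2] by (simp add: card_cartesian_product)
  finally show ?thesis by (simp add: algebra_simps)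
qed

lemma lift_clause_props:
  assumes C: "finite C" "card C \<le> k" "fst ` C \<subseteq> {..<N}" and \<tau>: "\<tau> \<in> C \<rightarrow>\<^sub>E {..<2 ^ l}"
  shows "finite (lift_clause l C \<tau>) \<and> card (lift_clause l C \<tau>) \<le> k * (l + 1) \<and> fst ` lift_clause l C \<tau> \<subseteq> lift_vars N l"
proof -
  define XS where "XS lt = (\<lambda>j. (X (fst lt) j, \<not> odd (\<tau> lt div 2 ^ j))) ` {..<l}" for lt
  define YS where "YS = (\<lambda>lt. (Y (fst lt) (\<tau> lt), snd lt)) ` C"
  have x: "{(X (fst lt) j, \<not> odd (\<tau> lt div 2 ^ j)) | j. j < l} = XS lt" for lt unfolding XS_def by (simp add: setcompr_eq_image lessThan_def)
  have y: "{(Y (fst lt) (\<tau> lt), snd lt) | lt. lt \<in> C} = YS"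
  proof
    show "{(Y (fst lt) (\<tau> lt), snd lt) | lt. lt \<in> C} \<subseteq> YS"
    proof (rule subsetI)
      fix x assume "x \<in> {(Y (fst lt) (\<tau> lt), snd lt) | lt. lt \<in> C}"
      then obtain lt where "x = (Y (fst lt) (\<tau> lt), snd lt)" "lt \<in> C" by blast
      then show "x \<in> YS" unfolding YS_def by blast
    qed
    show "YS \<subseteq> {(Y (fst lt) (\<tau> lt), snd lt) | lt. lt \<in> C}" unfolding YS_def by blast
  qed
  have e: "lift_clause l C \<tau> = (\<Union>lt\<in>C. XS lt) \<union> YS"
    unfolding lift_clause_def x y ..
  have fin: "finite (lift_clause l C \<tau>)" unfolding e XS_def YS_def using C(1) by auto
  have cX: "card (XS lt) \<le> l" for lt unfolding XS_def using card_image_le[of "{..<l}"] by simp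
  have "card (\<Union>lt\<in>C. XS lt) \<le> (\<Sum>lt\<in>C. card (XS lt))" by (rule card_UN_le[OF C(1)])
  also have "\<dots> \<le> card C * l" using sum_bounded_above[of C "\<lambda>lt. card (XS lt)" l] cX by simp
  finally have c1: "card (\<Union>lt\<in>C. XS lt) \<le> card C * l" .
  have c2: "card YS \<le> card C" unfolding YS_def by (rule card_image_le[OF C(1)])
  have "card (lift_clause l C \<tau>) \<le> card (\<Union>lt\<in>C. XS lt) + card YS" unfolding e by (rule card_Un_le)
  also have "\<dots> \<le> card C * (l + 1)" using c1 c2 by simp
  also have "\<dots> \<le> k * (l + 1)" using C(2) by (intro mult_right_mono) auto
  finally have cc: "card (lift_clause l C \<tau>) \<le> k * (l + 1)" .
  have "fst ` lift_clause l C \<tau> \<subseteq> lift_vars N l"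
  proof
    fix v assume "v \<in> fst ` lift_clause l C \<tau>"
    then obtain b where vb: "(v, b) \<in> lift_clause l C \<tau>" by force
    then show "v \<in> lift_vars N l" unfolding lift_clause_def lift_vars_def using C(3) \<tau> by force
  qed
  then show ?thesis using fin cc by blast
qed

lemma card_lift:
  assumes f: "finite \<phi>" "\<forall>C\<in>\<phi>. finite C \<and> card C \<le> k"
  shows "card (lift l \<phi>) \<le> (2 ^ l) ^ k * card \<phi>"
    and "(\<forall>C\<in>\<phi>. card C = k) \<Longrightarrow> card (lift l \<phi>) = (2 ^ l) ^ k * card \<phi>"
proof -
  have fS: "finite (SIGMA C:\<phi>. C \<rightarrow>\<^sub>E {..<(2::nat) ^ l})" using f by (auto intro!: finite_PiE)
  have cS: "card (SIGMA C:\<phi>. C \<rightarrow>\<^sub>E {..<(2::nat) ^ l}) = (\<Sum>C\<in>\<phi>. (2 ^ l) ^ card C)"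
  proof -
    have "card (SIGMA C:\<phi>. C \<rightarrow>\<^sub>E {..<(2::nat) ^ l}) = (\<Sum>C\<in>\<phi>. card (C \<rightarrow>\<^sub>E {..<(2::nat) ^ l}))"
      using f by (intro card_SigmaI) (auto intro!: finite_PiE)
    also have "\<dots> = (\<Sum>C\<in>\<phi>. (2 ^ l) ^ card C)" using f by (intro sum.cong) (auto simp: card_PiE)
    finally show ?thesis .
  qed
  have eq: "card (lift l \<phi>) = (\<Sum>C\<in>\<phi>. (2 ^ l) ^ card C)"
    unfolding lift_eq using card_image[OF lift_inj] cS by simp
  have "(\<Sum>C\<in>\<phi>. ((2::nat) ^ l) ^ card C) \<le> (\<Sum>C\<in>\<phi>. (2 ^ l) ^ k)"
    using f by (intro sum_mono power_increasing) auto
  then show "card (lift l \<phi>) \<le> (2 ^ l) ^ k * card \<phi>" using eq by (simp add: mult.commute)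
  show "(\<forall>C\<in>\<phi>. card C = k) \<Longrightarrow> card (lift l \<phi>) = (2 ^ l) ^ k * card \<phi>"
    using eq by simp
qed


theorem corollary19:
  shows "\<exists>L::nat. \<forall>l\<ge>L. \<forall>(k::nat) (N::nat) (M::nat) (\<phi>::nat cnf).
    (finite \<phi> \<and> card \<phi> = M \<and> (\<forall>C\<in>\<phi>. finite C \<and> card C \<le> k \<and> fst ` C \<subseteq> {..<N})
      \<and> \<not> satisfiable \<phi>) \<longrightarrow>
    (let m = (2::nat) ^ l; \<phi>' = lift l \<phi>; Z = lift_vars N l in
      finite \<phi>' \<and> (\<forall>D\<in>\<phi>'. finite D \<and> card D \<le> k * (l + 1) \<and> fst ` D \<subseteq> Z)
      \<and> card Z = N * (l + m)
      \<and> card \<phi>' \<le> m ^ k * M \<and> ((\<forall>C\<in>\<phi>. card C = k) \<longrightarrow> card \<phi>' = m ^ k * M)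
      \<and> tree_Res \<phi> \<le> tree_ResX Z \<phi>'
      \<and> 2 powr (real (width_Res \<phi>) - real k) \<le> real (tree_Res \<phi>))"
proof (intro exI[of _ 1] allI impI)
  fix l k N M :: nat and \<phi> :: "nat cnf"
  assume l1: "1 \<le> l"
  assume H: "finite \<phi> \<and> card \<phi> = M \<and> (\<forall>C\<in>\<phi>. finite C \<and> card C \<le> k \<and> fst ` C \<subseteq> {..<N}) \<and> \<not> satisfiable \<phi>"
  have fphi: "finite \<phi>" and M: "card \<phi> = M" and cl: "\<forall>C\<in>\<phi>. finite C \<and> card C \<le> k \<and> fst ` C \<subseteq> {..<N}"
    and uns: "\<not> satisfiable \<phi>" using H by blast+
  have h\<phi>: "\<forall>C\<in>\<phi>. fst ` C \<subseteq> {..<N}" and fk: "\<forall>C\<in>\<phi>. finite C \<and> card C \<le> k" using cl by blast+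
  have f1: "finite (lift l \<phi>)" unfolding lift_eq using fphi cl by (auto intro!: finite_PiE)
  have f2: "\<forall>D\<in>lift l \<phi>. finite D \<and> card D \<le> k * (l + 1) \<and> fst ` D \<subseteq> lift_vars N l"
  proof
    fix D assume "D \<in> lift l \<phi>"
    then obtain C \<tau> where "D = lift_clause l C \<tau>" "C \<in> \<phi>" "\<tau> \<in> C \<rightarrow>\<^sub>E {..<2 ^ l}" unfolding lift_def by blast
    then show "finite D \<and> card D \<le> k * (l + 1) \<and> fst ` D \<subseteq> lift_vars N l"
      using lift_clause_props[of C k N \<tau> l] cl by blast
  qed
  have f3: "card (lift_vars N l) = N * (l + 2 ^ l)" by (rule card_lift_vars)
  have f4: "card (lift l \<phi>) \<le> (2 ^ l) ^ k * M" using card_lift(1)[OF fphi fk] M by simp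
  have f5: "(\<forall>C\<in>\<phi>. card C = k) \<longrightarrow> card (lift l \<phi>) = (2 ^ l) ^ k * M" using card_lift(2)[OF fphi fk] M by simp
  have f6: "tree_Res \<phi> \<le> tree_ResX (lift_vars N l) (lift l \<phi>)" using main_tree(1)[OF l1 h\<phi> uns] .
  have f7: "2 powr (real (width_Res \<phi>) - real k) \<le> real (tree_Res \<phi>)"
    using width_tree[OF fk main_tree(2)[OF l1 h\<phi> uns]] .
  show "let m = (2::nat) ^ l; \<phi>' = lift l \<phi>; Z = lift_vars N l in
      finite \<phi>' \<and> (\<forall>D\<in>\<phi>'. finite D \<and> card D \<le> k * (l + 1) \<and> fst ` D \<subseteq> Z)
      \<and> card Z = N * (l + m)
      \<and> card \<phi>' \<le> m ^ k * M \<and> ((\<forall>C\<in>\<phi>. card C = k) \<longrightarrow> card \<phi>' = m ^ k * M)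
      \<and> tree_Res \<phi> \<le> tree_ResX Z \<phi>'
      \<and> 2 powr (real (width_Res \<phi>) - real k) \<le> real (tree_Res \<phi>)"
    unfolding Let_def using f1 f2 f3 f4 f5 f6 f7 by blast
qed

end
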